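(* Let $A_1A_2A_3A_4$ be a (non-degenerate) tetrahedron in $\mathbb{R}^3$ with $A_1A_4+A_2A_3>A_1A_2+A_3A_4$, and let $B_1,B_2,B_3,B_4,B_{12},B_{34}$ be positive real numbers. Put $B_{ST}=\frac{B_{12}+B_{34}}{2}$ and $$f(O_{12},O_{34})=B_1|A_1O_{12}|+B_2|A_2O_{12}|+B_3|A_3O_{34}|+B_4|A_4O_{34}|+B_{ST}\,|O_{12}O_{34}|,\qquad O_{12},O_{34}\in\mathbb{R}^3 .$$ Suppose $(O_{12},O_{34})$ is a minimizer of $f$ such that $O_{12}$ and $O_{34}$ are interior points of the tetrahedron with $O_{12}\neq O_{34}$. Let $\alpha_{12}=\angle A_1O_{12}A_2$, $\alpha_1=\angle A_2O_{12}O_{34}$, $\alpha_{34}=\angle A_3O_{34}A_4$, $\alpha_4=\angle A_3O_{34}O_{12}$. Then $$\cos\alpha_{12}=\frac{B_{ST}^2-B_1^2-B_2^2}{2B_1B_2},\quad \cos\alpha_1=\frac{B_1^2-B_2^2-B_{ST}^2}{2B_2B_{ST}},$$ $$\cos\alpha_{34}=\frac{B_{ST}^2-B_3^2-B_4^2}{2B_3B_4},\quad \cos\alpha_4=\frac{B_4^2-B_3^2-B_{ST}^2}{2B_3B_{ST}}.$$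
   Context: $|XY|$ denotes Euclidean distance and $\angle XYZ\in[0,\pi]$ the angle at $Y$. The problem of minimizing $f$ is the weighted Steiner problem for the four points (with weights $B_i$ at $A_i$ and weights $B_{12},B_{34}$ at the two interior nodes $O_{12},O_{34}$, the nodes being the weighted Fermat–Torricelli points). *)

theory Defs
  imports "HOL-Analysis.Analysis"
begin

definition angle_at :: "real^3 \<Rightarrow> real^3 \<Rightarrow> real^3 \<Rightarrow> real" where
  "angle_at X Y Z = arccos (((X - Y) \<bullet> (Z - Y)) / (norm (X - Y) * norm (Z - Y)))"

definition steiner_f :: "real^3 \<Rightarrow> real^3 \<Rightarrow> real^3 \<Rightarrow> real^3 \<Rightarrow>
    real \<Rightarrow> real \<Rightarrow> real \<Rightarrow> real \<Rightarrow> real \<Rightarrow> real \<Rightarrow> real^3 \<Rightarrow> real^3 \<Rightarrow> real" where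
  "steiner_f A1 A2 A3 A4 B1 B2 B3 B4 B12 B34 O12 O34 =
     B1 * dist A1 O12 + B2 * dist A2 O12 + B3 * dist A3 O34 + B4 * dist A4 O34
     + ((B12 + B34) / 2) * dist O12 O34"

end

theory Submission imports Defs begin

lemma dnorm:
  fixes a x :: "'a::real_inner"
  assumes "x \<noteq> a"
  shows "((\<lambda>y. norm (y - a)) has_derivative (\<lambda>h. sgn (x - a) \<bullet> h)) (at x)"
proof -
  have "((\<lambda>y. y - a) has_derivative (\<lambda>h. h)) (at x)"
    by (auto intro!: derivative_eq_intros)
  from has_derivative_compose[OF this has_derivative_norm[of "x - a"]] assms
  show ?thesis by (simp add: o_def inner_commute)
qed

lemma grad_zero:
  fixes a b c x :: "'a::real_inner"
  assumes "x \<noteq> a" "x \<noteq> b" "x \<noteq> c"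
    and min: "\<And>y. p*norm(x-a)+q*norm(x-b)+r*norm(x-c) \<le> p*norm(y-a)+q*norm(y-b)+r*norm(y-c)"
  shows "p *\<^sub>R sgn(x-a) + q *\<^sub>R sgn(x-b) + r *\<^sub>R sgn(x-c) = 0"
proof -
  define G where "G = p *\<^sub>R sgn(x-a) + q *\<^sub>R sgn(x-b) + r *\<^sub>R sgn(x-c)"
  have d: "((\<lambda>y. p*norm(y-a)+q*norm(y-b)+r*norm(y-c)) has_derivative (\<lambda>h. G \<bullet> h)) (at x)"
    unfolding G_def
    by (rule has_derivative_eq_rhs, (rule has_derivative_add has_derivative_mult_right dnorm assms)+)
       (auto simp: inner_add_left fun_eq_iff)
  have "(\<lambda>h. G \<bullet> h) = (\<lambda>h. 0)"
    by (rule has_derivative_local_min[OF d]) (auto intro: always_eventually min)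
  then have "G \<bullet> G = 0" by metis
  then show ?thesis unfolding G_def by simp
qed

lemma unit_rel:
  fixes u v w :: "'a::real_inner"
  assumes "norm u = 1" "norm v = 1" "norm w = 1" "p > 0" "q > 0" "r > 0"
    and "p *\<^sub>R u + q *\<^sub>R v + r *\<^sub>R w = 0"
  shows "u \<bullet> v = (r\<^sup>2 - p\<^sup>2 - q\<^sup>2) / (2*p*q)" "v \<bullet> w = (p\<^sup>2 - q\<^sup>2 - r\<^sup>2) / (2*q*r)"
proof -
  have uu: "u \<bullet> u = 1" "v \<bullet> v = 1" "w \<bullet> w = 1" using assms(1-3) by (simp_all add: dot_square_norm)
  have e1: "r *\<^sub>R w = - (p *\<^sub>R u + q *\<^sub>R v)" using assms(7) by (simp add: algebra_simps eq_neg_iff_add_eq_0)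
  have "(r *\<^sub>R w) \<bullet> (r *\<^sub>R w) = (p *\<^sub>R u + q *\<^sub>R v) \<bullet> (p *\<^sub>R u + q *\<^sub>R v)" unfolding e1 inner_minus_left inner_minus_right minus_minus by (rule refl)
  then have "r^2 = p^2 + q^2 + 2*p*q*(u \<bullet> v)"
    by (simp add: inner_add_left inner_add_right uu inner_commute power2_eq_square algebra_simps)
  then show "u \<bullet> v = (r\<^sup>2 - p\<^sup>2 - q\<^sup>2) / (2*p*q)" using assms by (simp add: field_simps)
  have e2: "p *\<^sub>R u = - (q *\<^sub>R v + r *\<^sub>R w)" using assms(7) by (simp add: algebra_simps eq_neg_iff_add_eq_0)
  have "(p *\<^sub>R u) \<bullet> (p *\<^sub>R u) = (q *\<^sub>R v + r *\<^sub>R w) \<bullet> (q *\<^sub>R v + r *\<^sub>R w)" unfolding e2 inner_minus_left inner_minus_right minus_minus by (rule refl)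
  then have "p^2 = q^2 + r^2 + 2*q*r*(v \<bullet> w)"
    by (simp add: inner_add_left inner_add_right uu inner_commute power2_eq_square algebra_simps)
  then show "v \<bullet> w = (p\<^sup>2 - q\<^sup>2 - r\<^sup>2) / (2*q*r)" using assms by (simp add: field_simps)
qed

lemma cos_angle:
  assumes "X \<noteq> Y" "Z \<noteq> Y"
  shows "cos (angle_at X Y Z) = sgn (Y - X) \<bullet> sgn (Y - Z)"
proof -
  have e0: "(X - Y) \<bullet> (Z - Y) = (Y - X) \<bullet> (Y - Z)"
    by (metis inner_minus_left inner_minus_right minus_diff_eq minus_minus)
  have e: "((X - Y) \<bullet> (Z - Y)) / (norm (X - Y) * norm (Z - Y)) = sgn (Y - X) \<bullet> sgn (Y - Z)"
    unfolding e0 by (simp add: sgn_div_norm norm_minus_commute[of X] norm_minus_commute[of Z] divide_inverse mult.commute mult.left_commute)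
  have "\<bar>sgn (Y - X) \<bullet> sgn (Y - Z)\<bar> \<le> norm (sgn (Y - X)) * norm (sgn (Y - Z))"
    by (rule Cauchy_Schwarz_ineq2)
  also have "\<dots> \<le> 1" by (simp add: norm_sgn)
  finally show ?thesis unfolding angle_at_def e by (simp add: cos_arccos_abs)
qed

lemma vertex_not_interior:
  fixes a b c d :: "real^3"
  assumes "\<not> coplanar {a, b, c, d}"
  shows "a \<notin> interior (convex hull {a, b, c, d})"
proof -
  have "a \<notin> convex hull {b, c, d}"
  proof
    assume "a \<in> convex hull {b, c, d}"
    then have "a \<in> affine hull {b, c, d}" using convex_hull_subset_affine_hull by blast
    then have "{a, b, c, d} \<subseteq> affine hull {b, c, d}" by (auto intro: hull_inc)
    then show False using assms unfolding coplanar_def by blast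
  qed
  then have "a extreme_point_of (convex hull {a, b, c, d})"
    using extreme_point_of_convex_hull_insert[of "{b,c,d}" a] by simp
  then show ?thesis by (rule extreme_point_not_in_interior)
qed

theorem theorem3:
  fixes A1 A2 A3 A4 O12 O34 :: "real^3"
    and B1 B2 B3 B4 B12 B34 :: real
  assumes nondeg: "\<not> coplanar {A1, A2, A3, A4}"
    and ineq: "dist A1 A4 + dist A2 A3 > dist A1 A2 + dist A3 A4"
    and pos: "B1 > 0" "B2 > 0" "B3 > 0" "B4 > 0" "B12 > 0" "B34 > 0"
    and minim: "\<forall>P Q. steiner_f A1 A2 A3 A4 B1 B2 B3 B4 B12 B34 O12 O34
                       \<le> steiner_f A1 A2 A3 A4 B1 B2 B3 B4 B12 B34 P Q"
    and int12: "O12 \<in> interior (convex hull {A1, A2, A3, A4})"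
    and int34: "O34 \<in> interior (convex hull {A1, A2, A3, A4})"
    and neq: "O12 \<noteq> O34"
  shows "(cos (angle_at A1 O12 A2) = (((B12 + B34) / 2)\<^sup>2 - B1\<^sup>2 - B2\<^sup>2) / (2 * B1 * B2)) \<and>
     (cos (angle_at A2 O12 O34) = (B1\<^sup>2 - B2\<^sup>2 - ((B12 + B34) / 2)\<^sup>2) / (2 * B2 * ((B12 + B34) / 2))) \<and>
     (cos (angle_at A3 O34 A4) = (((B12 + B34) / 2)\<^sup>2 - B3\<^sup>2 - B4\<^sup>2) / (2 * B3 * B4)) \<and>
     (cos (angle_at A3 O34 O12) = (B4\<^sup>2 - B3\<^sup>2 - ((B12 + B34) / 2)\<^sup>2) / (2 * B3 * ((B12 + B34) / 2)))"
proof -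
  define BS where "BS = (B12 + B34) / 2"
  have BS: "BS > 0" using pos unfolding BS_def by simp
  have o1: "O12 \<noteq> A1" using int12 vertex_not_interior[OF nondeg] by auto
  have o2: "O12 \<noteq> A2" using int12 vertex_not_interior[of A2 A1 A3 A4] nondeg
    by (auto simp: insert_commute)
  have o3: "O34 \<noteq> A3" using int34 vertex_not_interior[of A3 A1 A2 A4] nondeg
    by (auto simp: insert_commute)
  have o4: "O34 \<noteq> A4" using int34 vertex_not_interior[of A4 A1 A2 A3] nondeg
    by (auto simp: insert_commute)
  have g1: "B1 *\<^sub>R sgn(O12-A1) + B2 *\<^sub>R sgn(O12-A2) + BS *\<^sub>R sgn(O12-O34) = 0"
  proof (rule grad_zero[OF o1 o2 neq])
    fix y
    show "B1*norm(O12-A1)+B2*norm(O12-A2)+BS*norm(O12-O34) \<le> B1*norm(y-A1)+B2*norm(y-A2)+BS*norm(y-O34)"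
      using minim[rule_format, of y O34] unfolding steiner_f_def BS_def[symmetric]
      by (simp add: dist_norm norm_minus_commute)
  qed
  have g2: "B3 *\<^sub>R sgn(O34-A3) + B4 *\<^sub>R sgn(O34-A4) + BS *\<^sub>R sgn(O34-O12) = 0"
  proof (rule grad_zero[OF o3 o4 neq[symmetric]])
    fix y
    show "B3*norm(O34-A3)+B4*norm(O34-A4)+BS*norm(O34-O12) \<le> B3*norm(y-A3)+B4*norm(y-A4)+BS*norm(y-O12)"
      using minim[rule_format, of O12 y] unfolding steiner_f_def BS_def[symmetric]
      by (simp add: dist_norm norm_minus_commute)
  qed
  have n: "norm (sgn (O12-A1)) = 1" "norm (sgn (O12-A2)) = 1" "norm (sgn (O12-O34)) = 1"
     "norm (sgn (O34-A3)) = 1" "norm (sgn (O34-A4)) = 1" "norm (sgn (O34-O12)) = 1"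
    using o1 o2 o3 o4 neq by (simp_all add: norm_sgn)
  note r1 = unit_rel[OF n(1-3) pos(1,2) BS g1]
  note r2 = unit_rel[OF n(4-6) pos(3,4) BS g2]
  have "cos (angle_at A1 O12 A2) = (BS\<^sup>2 - B1\<^sup>2 - B2\<^sup>2) / (2 * B1 * B2)"
    using cos_angle[of A1 O12 A2] o1 o2 r1(1) by auto
  moreover have "cos (angle_at A2 O12 O34) = (B1\<^sup>2 - B2\<^sup>2 - BS\<^sup>2) / (2 * B2 * BS)"
    using cos_angle[of A2 O12 O34] o2 neq r1(2) by auto
  moreover have "cos (angle_at A3 O34 A4) = (BS\<^sup>2 - B3\<^sup>2 - B4\<^sup>2) / (2 * B3 * B4)"
    using cos_angle[of A3 O34 A4] o3 o4 r2(1) by auto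
  moreover have "cos (angle_at A3 O34 O12) = (B4\<^sup>2 - B3\<^sup>2 - BS\<^sup>2) / (2 * B3 * BS)"
  proof -
    have "sgn (O34 - A4) \<bullet> sgn (O34 - O12) = (B3\<^sup>2 - B4\<^sup>2 - BS\<^sup>2) / (2 * B4 * BS)"
      using r2(2) .
    have g2': "B4 *\<^sub>R sgn(O34-A4) + B3 *\<^sub>R sgn(O34-A3) + BS *\<^sub>R sgn(O34-O12) = 0"
      using g2 by (simp add: algebra_simps)
    note r3 = unit_rel[OF n(5) n(4) n(6) pos(4,3) BS g2']
    show ?thesis using cos_angle[of A3 O34 O12] o3 neq r3(2) by auto
  qed
  ultimately show ?thesis unfolding BS_def by simp
qed

end
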